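(* Let $n,k,\ell\ge1$ and let $P$ be an $(n,k,\ell)$ correlation problem with input distribution $\mu$. Suppose that for some $\delta$ with $0\le\delta\le1$ and some $r\ge0$, every rectangle $R=R_1\times\cdots\times R_n\subseteq\{1,\ldots,k\}^n$ with $\mathrm{adv}_a(R)\ge\delta$ satisfies $\mu(R)\le r$, for every $a\in\{1,\ldots,\ell\}^n$. Then every classical model with shared randomness in which $c$ bits are broadcast, having detection efficiency $\eta$ and error probability $\epsilon$, satisfies \[ \frac{1}{2^c}\,\eta^n\Big(1-\epsilon\,\frac{1}{1-\delta}\Big)\le \ell^n r . \]
   Context: An $(n,k,\ell)$ correlation problem with input distribution $\mu$ (a probability distribution on $\{1,\ldots,k\}^n$) is a family of probability distributions $P(\cdot|x)$ on outputs $a\in\{1,\ldots,\ell\}^n$, one for each input $x$ with $\mu(x)>0$. For $a\in\{1,\ldots,\ell\}^n$ let $\mathrm{adm}_a=\{x:P(a|x)>0\}$, and for a set $S$ of inputs let $\mathrm{adv}_a(S)=\mu(S\cap\mathrm{adm}_a)/\mu(S)$. A deterministic classical model with communication is a rooted protocol tree: each internal node is labeled by a party who broadcasts which child to go to, according to a partition of that party's input set $\{1,\ldots,k\}$ among the outgoing edges; each leaf $v$ carries local output functions $\lambda_{v,i}$ from $\{1,\ldots,k\}$ to $\{1,\ldots,\ell\}\cup\{\perp\}$ ($\perp$ = no detector click); on input $x$ the execution follows the tree to a leaf $v$ and party $i$ outputs $\lambda_{v,i}(x_i)$. The number of bits broadcast is $c=\sum\lceil\log t_j\rceil$, the $t_j$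 being the numbers of children of the nodes on the path taken (maximized over paths). A classical model with shared randomness is a probability distribution over such deterministic models, inducing output probabilities $Q(a|x)$. Let $C$ be the indicator that all outputs differ from $\perp$; the detection efficiency is $\eta=(\mathbb E_{x\sim\mu}[\sum_aQ(a|x)C])^{1/n}$; with $F$ the indicator of $P(a|x)=0$, the error probability is $\epsilon=\mathbb E_{x\sim\mu}[\sum_aQ(a|x)\,F\,C/\eta^n]$. *)

theory Defs
  imports "HOL-Probability.Probability"
begin

text \<open>Parties are indexed by 0..<n.
  An output with possible non-clicks is an element of ({1..l} + bottom)^n,
  with bottom represented by None.\<close>

definition inputs :: "nat \<Rightarrow> nat \<Rightarrow> (nat \<Rightarrow> nat) set" where
  "inputs n k = PiE {..<n} (\<lambda>_. {1..k})"

definition outputs :: "nat \<Rightarrow> nat \<Rightarrow> (nat \<Rightarrow> nat) set" where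
  "outputs n l = PiE {..<n} (\<lambda>_. {1..l})"

definition click_outputs :: "nat \<Rightarrow> nat \<Rightarrow> (nat \<Rightarrow> nat option) set" where
  "click_outputs n l = PiE {..<n} (\<lambda>_. insert None (Some ` {1..l}))"

definition input_distribution :: "nat \<Rightarrow> nat \<Rightarrow> ((nat \<Rightarrow> nat) \<Rightarrow> real) \<Rightarrow> bool" where
  "input_distribution n k \<mu> \<longleftrightarrow>
     (\<forall>x\<in>inputs n k. 0 \<le> \<mu> x) \<and> (\<Sum>x\<in>inputs n k. \<mu> x) = 1"

text \<open>P a x = P(a|x); for each input x with mu(x) > 0, P(.|x) is a probability
  distribution on {1..l}^n.\<close>
definition correlation_problem ::
  "nat \<Rightarrow> nat \<Rightarrow> nat \<Rightarrow> ((nat \<Rightarrow> nat) \<Rightarrow> real) \<Rightarrow> ((nat \<Rightarrow> nat) \<Rightarrow> (nat \<Rightarrow> nat) \<Rightarrow> real) \<Rightarrow> bool" where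
  "correlation_problem n k l \<mu> P \<longleftrightarrow> input_distribution n k \<mu> \<and>
     (\<forall>x\<in>inputs n k. 0 < \<mu> x \<longrightarrow>
        (\<forall>a\<in>outputs n l. 0 \<le> P a x) \<and> (\<Sum>a\<in>outputs n l. P a x) = 1)"

definition mu_set :: "((nat \<Rightarrow> nat) \<Rightarrow> real) \<Rightarrow> (nat \<Rightarrow> nat) set \<Rightarrow> real" where
  "mu_set \<mu> S = (\<Sum>x\<in>S. \<mu> x)"

definition adm :: "nat \<Rightarrow> nat \<Rightarrow> ((nat \<Rightarrow> nat) \<Rightarrow> (nat \<Rightarrow> nat) \<Rightarrow> real) \<Rightarrow> (nat \<Rightarrow> nat) \<Rightarrow> (nat \<Rightarrow> nat) set" where
  "adm n k P a = {x \<in> inputs n k. P a x > 0}"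

definition adv :: "nat \<Rightarrow> nat \<Rightarrow> ((nat \<Rightarrow> nat) \<Rightarrow> real) \<Rightarrow> ((nat \<Rightarrow> nat) \<Rightarrow> (nat \<Rightarrow> nat) \<Rightarrow> real)
                    \<Rightarrow> (nat \<Rightarrow> nat) \<Rightarrow> (nat \<Rightarrow> nat) set \<Rightarrow> real" where
  "adv n k \<mu> P a S = mu_set \<mu> (S \<inter> adm n k P a) / mu_set \<mu> S"

definition rectangle :: "nat \<Rightarrow> (nat \<Rightarrow> nat set) \<Rightarrow> (nat \<Rightarrow> nat) set" where
  "rectangle n Rs = PiE {..<n} Rs"

text \<open>Node i t f g: internal node labelled by party i with t children g 0, ..., g (t-1);
  party i's input value v selects child f v.  Leaf \<lambda>: party i outputs \<lambda> i (x i),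
  where None stands for bottom (no detector click).\<close>
datatype proto = Leaf "nat \<Rightarrow> nat \<Rightarrow> nat option" | Node nat nat "nat \<Rightarrow> nat" "nat \<Rightarrow> proto"

primrec run :: "proto \<Rightarrow> (nat \<Rightarrow> nat) \<Rightarrow> nat \<Rightarrow> nat option" where
  "run (Leaf lam) x = (\<lambda>i. lam i (x i))"
| "run (Node i t f g) x = run (g (f (x i))) x"

primrec bits :: "proto \<Rightarrow> nat" where
  "bits (Leaf lam) = 0"
| "bits (Node i t f g) = nat \<lceil>log 2 (real t)\<rceil> + Max ((\<lambda>j. bits (g j)) ` {..<t})"

text \<open>Well-formed protocol: node labels are parties, the outgoing edges of a node
  correspond to a partition of {1..k} (into nonempty blocks indexed 0..<t), and
  leaf output functions take values in {1..l} or bottom.\<close>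
inductive valid_proto :: "nat \<Rightarrow> nat \<Rightarrow> nat \<Rightarrow> proto \<Rightarrow> bool" for n k l where
  leaf: "(\<forall>i<n. \<forall>v\<in>{1..k}. lam i v \<in> insert None (Some ` {1..l}))
          \<Longrightarrow> valid_proto n k l (Leaf lam)"
| node: "i < n \<Longrightarrow> f ` {1..k} = {..<t} \<Longrightarrow> (\<forall>j<t. valid_proto n k l (g j))
          \<Longrightarrow> valid_proto n k l (Node i t f g)"

text \<open>A classical model is a (discrete) probability distribution M over deterministic
  protocol trees.  Its output on input x, restricted to the n parties:\<close>
definition mout :: "nat \<Rightarrow> proto \<Rightarrow> (nat \<Rightarrow> nat) \<Rightarrow> nat \<Rightarrow> nat option" where
  "mout n T x = restrict (run T x) {..<n}"

definition Q :: "nat \<Rightarrow> proto pmf \<Rightarrow> (nat \<Rightarrow> nat option) \<Rightarrow> (nat \<Rightarrow> nat) \<Rightarrow> real" where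
  "Q n M w x = pmf (map_pmf (\<lambda>T. mout n T x) M) w"

definition clicked :: "nat \<Rightarrow> (nat \<Rightarrow> nat option) \<Rightarrow> bool" where
  "clicked n w \<longleftrightarrow> (\<forall>i<n. w i \<noteq> None)"

definition the_out :: "nat \<Rightarrow> (nat \<Rightarrow> nat option) \<Rightarrow> nat \<Rightarrow> nat" where
  "the_out n w = restrict (\<lambda>i. the (w i)) {..<n}"

definition efficiency :: "nat \<Rightarrow> nat \<Rightarrow> nat \<Rightarrow> ((nat \<Rightarrow> nat) \<Rightarrow> real) \<Rightarrow> proto pmf \<Rightarrow> real" where
  "efficiency n k l \<mu> M = root n (\<Sum>x\<in>inputs n k. \<mu> x *
      (\<Sum>w\<in>click_outputs n l. Q n M w x * (if clicked n w then 1 else 0)))"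

definition error_prob :: "nat \<Rightarrow> nat \<Rightarrow> nat \<Rightarrow> ((nat \<Rightarrow> nat) \<Rightarrow> real)
     \<Rightarrow> ((nat \<Rightarrow> nat) \<Rightarrow> (nat \<Rightarrow> nat) \<Rightarrow> real) \<Rightarrow> proto pmf \<Rightarrow> real" where
  "error_prob n k l \<mu> P M = (\<Sum>x\<in>inputs n k. \<mu> x *
      (\<Sum>w\<in>click_outputs n l. Q n M w x *
          (if P (the_out n w) x = 0 then 1 else 0) * (if clicked n w then 1 else 0)))
      / (efficiency n k l \<mu> M) ^ n"

end

theory Submission
  imports Defs
begin

definition Cind :: "nat \<Rightarrow> proto \<Rightarrow> (nat \<Rightarrow> nat) \<Rightarrow> real" where
  "Cind n T x = (if clicked n (mout n T x) then 1 else 0)"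
definition Fci :: "nat \<Rightarrow> ((nat \<Rightarrow> nat) \<Rightarrow> (nat \<Rightarrow> nat) \<Rightarrow> real) \<Rightarrow> proto \<Rightarrow> (nat \<Rightarrow> nat) \<Rightarrow> real" where
  "Fci n P T x = (if P (the_out n (mout n T x)) x = 0 then 1 else 0) * Cind n T x"
definition Amass where "Amass n \<mu> D T = (\<Sum>x\<in>D. \<mu> x * Cind n T x)"
definition Emass where "Emass n P \<mu> D T = (\<Sum>x\<in>D. \<mu> x * Fci n P T x)"
definition errm :: "((nat \<Rightarrow> nat) \<Rightarrow> real) \<Rightarrow> ((nat \<Rightarrow> nat) \<Rightarrow> (nat \<Rightarrow> nat) \<Rightarrow> real) \<Rightarrow> (nat \<Rightarrow> nat) \<Rightarrow> (nat \<Rightarrow> nat) set \<Rightarrow> real"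
  where "errm \<mu> P a R = (\<Sum>x\<in>R. \<mu> x * (if P a x = 0 then 1 else 0))"

lemma leaf_group:
  fixes \<phi> :: "(nat \<Rightarrow> nat) \<Rightarrow> (nat \<Rightarrow> nat) \<Rightarrow> real"
  assumes Ds: "\<forall>i<n. Ds i \<subseteq> {1..k}"
    and lam: "\<forall>i<n. \<forall>v\<in>{1..k}. lam i v \<in> insert None (Some ` {1..l})"
  shows "(\<Sum>x\<in>PiE {..<n} Ds. if clicked n (mout n (Leaf lam) x)
            then \<phi> (the_out n (mout n (Leaf lam) x)) x else 0)
       = (\<Sum>a\<in>outputs n l. \<Sum>x\<in>PiE {..<n} (\<lambda>i. {v\<in>Ds i. lam i v = Some (a i)}). \<phi> a x)"
proof -
  define D where "D = PiE {..<n} Ds"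
  define cl where "cl x = clicked n (mout n (Leaf lam) x)" for x
  define ov where "ov x = the_out n (mout n (Leaf lam) x)" for x
  have finD: "finite D" unfolding D_def
    by (rule finite_PiE) (use Ds in \<open>auto intro: finite_subset\<close>)
  have finO: "finite (outputs n l)" unfolding outputs_def by (rule finite_PiE) auto
  have "(\<Sum>x\<in>D. if cl x then \<phi> (ov x) x else 0) = (\<Sum>x\<in>{x\<in>D. cl x}. \<phi> (ov x) x)"
    using finD by (simp add: sum.inter_filter)
  also have "\<dots> = (\<Sum>a\<in>outputs n l. \<Sum>x\<in>{x\<in>{x\<in>D. cl x}. ov x = a}. \<phi> (ov x) x)"
  proof (rule sum.group[symmetric])
    show "finite {x \<in> D. cl x}" using finD by simp
    show "finite (outputs n l)" by (rule finO)
    show "ov ` {x \<in> D. cl x} \<subseteq> outputs n l"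
    proof clarify
      fix x assume x: "x \<in> D" "cl x"
      have "\<forall>i<n. lam i (x i) \<noteq> None" using x(2)
        by (auto simp: cl_def clicked_def mout_def)
      moreover have "\<forall>i<n. x i \<in> {1..k}" using x(1) Ds by (fastforce simp: D_def PiE_iff)
      ultimately have "\<forall>i<n. the (lam i (x i)) \<in> {1..l}"
      proof (intro allI impI)
        fix i assume i: "i < n" and nn: "\<forall>i<n. lam i (x i) \<noteq> None" and xk: "\<forall>i<n. x i \<in> {1..k}"
        have "lam i (x i) \<in> insert None (Some ` {1..l})" using lam i xk by blast
        moreover have "lam i (x i) \<noteq> None" using nn i by blast
        ultimately show "the (lam i (x i)) \<in> {1..l}" by auto
      qed
      then show "ov x \<in> outputs n l"
        by (auto simp: ov_def the_out_def outputs_def mout_def PiE_iff)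
    qed
  qed
  also have "\<dots> = (\<Sum>a\<in>outputs n l. \<Sum>x\<in>PiE {..<n} (\<lambda>i. {v\<in>Ds i. lam i v = Some (a i)}). \<phi> a x)"
  proof (rule sum.cong[OF refl])
    fix a assume a: "a \<in> outputs n l"
    have eq: "{x\<in>{x\<in>D. cl x}. ov x = a} = PiE {..<n} (\<lambda>i. {v\<in>Ds i. lam i v = Some (a i)})"
    proof (intro set_eqI iffI)
      fix x assume "x \<in> {x\<in>{x\<in>D. cl x}. ov x = a}"
      then have x: "x \<in> D" "cl x" "ov x = a" by auto
      have nn: "\<forall>i<n. lam i (x i) \<noteq> None" using x(2)
        by (auto simp: cl_def clicked_def mout_def)
      have "\<forall>i<n. the (lam i (x i)) = a i" using x(3)
        by (auto simp: ov_def the_out_def mout_def)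
      then have "\<forall>i<n. lam i (x i) = Some (a i)" using nn by force
      then show "x \<in> PiE {..<n} (\<lambda>i. {v\<in>Ds i. lam i v = Some (a i)})"
        using x(1) by (auto simp: D_def PiE_iff)
    next
      fix x assume x: "x \<in> PiE {..<n} (\<lambda>i. {v\<in>Ds i. lam i v = Some (a i)})"
      then have "x \<in> D" by (auto simp: D_def PiE_iff)
      moreover have "cl x" using x by (auto simp: cl_def clicked_def mout_def PiE_iff)
      moreover have "ov x = a"
      proof
        fix i show "ov x i = a i"
          using x a by (cases "i < n") (auto simp: ov_def the_out_def mout_def PiE_iff outputs_def extensional_def)
      qed
      ultimately show "x \<in> {x\<in>{x\<in>D. cl x}. ov x = a}" by simp
    qed
    show "(\<Sum>x\<in>{x\<in>{x\<in>D. cl x}. ov x = a}. \<phi> (ov x) x) =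
          (\<Sum>x\<in>PiE {..<n} (\<lambda>i. {v\<in>Ds i. lam i v = Some (a i)}). \<phi> a x)"
      unfolding eq[symmetric] by (rule sum.cong) auto
  qed
  finally show ?thesis unfolding D_def cl_def ov_def .
qed


lemma node_split:
  fixes h :: "(nat \<Rightarrow> nat) \<Rightarrow> real" and f :: "nat \<Rightarrow> nat" and t :: nat
  assumes Ds: "\<forall>i<n. Ds i \<subseteq> {1..k}" and i: "i < n" and f: "f ` {1..k} = {..<t}"
  shows "(\<Sum>x\<in>PiE {..<n} Ds. h x) = (\<Sum>j<t. \<Sum>x\<in>PiE {..<n} (Ds(i := {v\<in>Ds i. f v = j})). h x)"
proof -
  define D where "D = PiE {..<n} Ds"
  have finD: "finite D" unfolding D_def
    by (rule finite_PiE) (use Ds in \<open>auto intro: finite_subset\<close>)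
  have "(\<Sum>x\<in>D. h x) = (\<Sum>j<t. \<Sum>x\<in>{x\<in>D. f (x i) = j}. h x)"
  proof (rule sum.group[symmetric])
    show "finite D" by (rule finD)
    show "finite {..<t}" by simp
    show "(\<lambda>x. f (x i)) ` D \<subseteq> {..<t}"
      using Ds i f by (fastforce simp: D_def PiE_iff)
  qed
  also have "\<dots> = (\<Sum>j<t. \<Sum>x\<in>PiE {..<n} (Ds(i := {v\<in>Ds i. f v = j})). h x)"
  proof (rule sum.cong[OF refl])
    fix j
    have "{x\<in>D. f (x i) = j} = PiE {..<n} (Ds(i := {v\<in>Ds i. f v = j}))"
      unfolding D_def
    proof (intro set_eqI iffI)
      fix x assume x: "x \<in> {x\<in>PiE {..<n} Ds. f (x i) = j}"
      show "x \<in> PiE {..<n} (Ds(i := {v\<in>Ds i. f v = j}))"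
        unfolding PiE_iff
      proof (intro conjI ballI)
        fix i' assume "i' \<in> {..<n}"
        then show "x i' \<in> (Ds(i := {v\<in>Ds i. f v = j})) i'" using x by (cases "i' = i") (auto simp: PiE_iff)
      qed (use x in \<open>simp add: PiE_iff\<close>)
    next
      fix x assume x: "x \<in> PiE {..<n} (Ds(i := {v\<in>Ds i. f v = j}))"
      have "x i \<in> {v\<in>Ds i. f v = j}" using x i by (metis PiE_mem fun_upd_same lessThan_iff)
      moreover have "x \<in> PiE {..<n} Ds" unfolding PiE_iff
      proof (intro conjI ballI)
        fix i' assume i': "i' \<in> {..<n}"
        have "x i' \<in> (Ds(i := {v\<in>Ds i. f v = j})) i'" using x i' by (rule PiE_mem)
        then show "x i' \<in> Ds i'" by (cases "i' = i") auto
      qed (use x in \<open>simp add: PiE_iff\<close>)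
      ultimately show "x \<in> {x\<in>PiE {..<n} Ds. f (x i) = j}" by simp
    qed
    then show "(\<Sum>x\<in>{x\<in>D. f (x i) = j}. h x) = (\<Sum>x\<in>PiE {..<n} (Ds(i := {v\<in>Ds i. f v = j})). h x)"
      by simp
  qed
  finally show ?thesis unfolding D_def .
qed

lemma t_le_pow: "1 \<le> t \<Longrightarrow> real t \<le> 2 ^ nat \<lceil>log 2 (real t)\<rceil>"
proof -
  assume "1 \<le> t"
  then have "real t = 2 powr (log 2 (real t))" by simp
  also have "\<dots> \<le> 2 powr (real (nat \<lceil>log 2 (real t)\<rceil>))"
    by (intro powr_mono) (auto, linarith)
  also have "\<dots> = 2 ^ nat \<lceil>log 2 (real t)\<rceil>" by (simp add: powr_realpow)
  finally show ?thesis .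
qed

lemma card_outputs: "card (outputs n l) = l ^ n"
  by (simp add: outputs_def card_PiE)

lemma det:
  assumes vp: "valid_proto n k l T"
  and hyp: "\<forall>a\<in>outputs n l. \<forall>Rs. (\<forall>i<n. Rs i \<subseteq> {1..k}) \<longrightarrow>
              mu_set \<mu> (rectangle n Rs) \<le> r + K * errm \<mu> P a (rectangle n Rs)"
  and r: "0 \<le> r" and k1: "1 \<le> k"
  shows "(\<forall>i<n. Ds i \<subseteq> {1..k}) \<Longrightarrow> Amass n \<mu> (PiE {..<n} Ds) T
           \<le> 2 ^ bits T * real l ^ n * r + K * Emass n P \<mu> (PiE {..<n} Ds) T"
  using vp
proof (induction T arbitrary: Ds rule: valid_proto.induct)
  case (leaf lam)
  define R where "R a = PiE {..<n} (\<lambda>i. {v\<in>Ds i. lam i v = Some (a i)})" for a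
  have RR: "\<forall>i<n. {v\<in>Ds i. lam i v = Some (a i)} \<subseteq> {1..k}" for a using leaf.prems by auto
  have A: "Amass n \<mu> (PiE {..<n} Ds) (Leaf lam) = (\<Sum>a\<in>outputs n l. mu_set \<mu> (R a))"
  proof -
    have "Amass n \<mu> (PiE {..<n} Ds) (Leaf lam) = (\<Sum>x\<in>PiE {..<n} Ds. if clicked n (mout n (Leaf lam) x)
            then (\<lambda>a x. \<mu> x) (the_out n (mout n (Leaf lam) x)) x else 0)"
      unfolding Amass_def by (rule sum.cong) (auto simp: Cind_def)
    also have "\<dots> = (\<Sum>a\<in>outputs n l. mu_set \<mu> (R a))"
      by (subst leaf_group[OF leaf.prems leaf.hyps]) (simp add: mu_set_def R_def)
    finally show ?thesis .
  qed
  have E: "Emass n P \<mu> (PiE {..<n} Ds) (Leaf lam) = (\<Sum>a\<in>outputs n l. errm \<mu> P a (R a))"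
  proof -
    have "Emass n P \<mu> (PiE {..<n} Ds) (Leaf lam) = (\<Sum>x\<in>PiE {..<n} Ds. if clicked n (mout n (Leaf lam) x)
            then (\<lambda>a x. \<mu> x * (if P a x = 0 then 1 else 0)) (the_out n (mout n (Leaf lam) x)) x else 0)"
      unfolding Emass_def by (rule sum.cong) (auto simp: Fci_def Cind_def)
    also have "\<dots> = (\<Sum>a\<in>outputs n l. errm \<mu> P a (R a))"
      by (subst leaf_group[OF leaf.prems leaf.hyps]) (simp add: errm_def R_def)
    finally show ?thesis .
  qed
  have "(\<Sum>a\<in>outputs n l. mu_set \<mu> (R a)) \<le> (\<Sum>a\<in>outputs n l. r + K * errm \<mu> P a (R a))"
  proof (rule sum_mono)
    fix a assume a: "a \<in> outputs n l"
    show "mu_set \<mu> (R a) \<le> r + K * errm \<mu> P a (R a)"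
      using hyp[THEN bspec, OF a, THEN spec, THEN mp, OF RR[of a]] unfolding R_def rectangle_def .
  qed
  also have "\<dots> = real l ^ n * r + K * (\<Sum>a\<in>outputs n l. errm \<mu> P a (R a))"
    by (simp add: sum.distrib sum_distrib_left card_outputs)
  finally show ?case using A E by simp
next
  case (node i f t g)
  define Dj where "Dj j = Ds(i := {v\<in>Ds i. f v = j})" for j
  have Djk: "\<forall>i'<n. Dj j i' \<subseteq> {1..k}" for j using node.prems by (auto simp: Dj_def)
  have run_eq: "x \<in> PiE {..<n} (Dj j) \<Longrightarrow> run (Node i t f g) x = run (g j) x" for x j
  proof -
    assume "x \<in> PiE {..<n} (Dj j)"
    then have "x i \<in> Dj j i" using node.hyps(1) by (auto simp: PiE_iff)
    then have "f (x i) = j" by (simp add: Dj_def)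
    then show ?thesis by simp
  qed
  have cC: "Cind n (Node i t f g) x = Cind n (g j) x" "Fci n P (Node i t f g) x = Fci n P (g j) x"
    if "x \<in> PiE {..<n} (Dj j)" for x j
    using run_eq[OF that] by (simp_all add: Cind_def Fci_def mout_def del: run.simps)
  have A: "Amass n \<mu> (PiE {..<n} Ds) (Node i t f g) = (\<Sum>j<t. Amass n \<mu> (PiE {..<n} (Dj j)) (g j))"
    unfolding Amass_def
    apply (subst node_split[OF node.prems node.hyps(1,2)])
    unfolding Dj_def[symmetric]
    apply (rule sum.cong[OF refl])
    apply (rule sum.cong[OF refl])
    apply (simp add: cC)
    done
  have E: "Emass n P \<mu> (PiE {..<n} Ds) (Node i t f g) = (\<Sum>j<t. Emass n P \<mu> (PiE {..<n} (Dj j)) (g j))"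
    unfolding Emass_def
    apply (subst node_split[OF node.prems node.hyps(1,2)])
    unfolding Dj_def[symmetric]
    apply (rule sum.cong[OF refl])
    apply (rule sum.cong[OF refl])
    apply (simp add: cC)
    done
  have t1: "1 \<le> t"
  proof -
    have "f 1 \<in> {..<t}" using node.hyps(2) k1 by auto
    then show ?thesis by simp
  qed
  have IH: "Amass n \<mu> (PiE {..<n} (Dj j)) (g j)
           \<le> 2 ^ bits (g j) * real l ^ n * r + K * Emass n P \<mu> (PiE {..<n} (Dj j)) (g j)" if "j < t" for j
    using node.IH that Djk by blast
  define L where "L = real l ^ n * r"
  have L0: "0 \<le> L" using r by (simp add: L_def)
  define m where "m = Max ((\<lambda>j. bits (g j)) ` {..<t})"
  have bm: "bits (g j) \<le> m" if "j < t" for j unfolding m_def using that by (intro Max_ge) auto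
  have "(\<Sum>j<t. (2::real) ^ bits (g j)) \<le> (\<Sum>j<t. 2 ^ m)"
    by (rule sum_mono) (simp add: bm power_increasing)
  also have "\<dots> = real t * 2 ^ m" by simp
  also have "\<dots> \<le> 2 ^ nat \<lceil>log 2 (real t)\<rceil> * 2 ^ m"
    by (rule mult_right_mono[OF t_le_pow[OF t1]]) simp
  also have "\<dots> = 2 ^ bits (Node i t f g)" by (simp add: m_def power_add)
  finally have sb: "(\<Sum>j<t. (2::real) ^ bits (g j)) \<le> 2 ^ bits (Node i t f g)" .
  have "(\<Sum>j<t. Amass n \<mu> (PiE {..<n} (Dj j)) (g j))
      \<le> (\<Sum>j<t. 2 ^ bits (g j) * L + K * Emass n P \<mu> (PiE {..<n} (Dj j)) (g j))"
    by (rule sum_mono) (use IH in \<open>simp add: L_def mult.assoc\<close>)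
  also have "\<dots> = (\<Sum>j<t. (2::real) ^ bits (g j)) * L + K * (\<Sum>j<t. Emass n P \<mu> (PiE {..<n} (Dj j)) (g j))"
    by (simp add: sum.distrib sum_distrib_left sum_distrib_right)
  also have "\<dots> \<le> 2 ^ bits (Node i t f g) * L + K * (\<Sum>j<t. Emass n P \<mu> (PiE {..<n} (Dj j)) (g j))"
    using mult_right_mono[OF sb L0] by simp
  finally show ?case using A E by (simp add: L_def mult.assoc)
qed


lemma fin_click: "finite (click_outputs n l)"
  unfolding click_outputs_def by (rule finite_PiE) auto
lemma fin_inputs: "finite (inputs n k)"
  unfolding inputs_def by (rule finite_PiE) auto

lemma mout_in:
  assumes "valid_proto n k l T" "x \<in> inputs n k"
  shows "mout n T x \<in> click_outputs n l"
  using assms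
proof (induction T rule: valid_proto.induct)
  case (leaf lam)
  then show ?case
    by (auto simp: mout_def click_outputs_def inputs_def PiE_iff extensional_def)
next
  case (node i f t g)
  have "x i \<in> {1..k}" using node.prems node.hyps(1) by (auto simp: inputs_def PiE_iff)
  then have "f (x i) < t" using node.hyps(2) by auto
  then show ?case using node.IH node.prems by (simp add: mout_def)
qed

lemma sumQ:
  fixes h :: "(nat \<Rightarrow> nat option) \<Rightarrow> real"
  assumes vp: "\<forall>T\<in>set_pmf M. valid_proto n k l T" and x: "x \<in> inputs n k"
  shows "(\<Sum>w\<in>click_outputs n l. Q n M w x * h w) = measure_pmf.expectation M (\<lambda>T. h (mout n T x))"
proof -
  have "measure_pmf.expectation M (\<lambda>T. h (mout n T x))
      = measure_pmf.expectation (map_pmf (\<lambda>T. mout n T x) M) h" by simp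
  also have "\<dots> = (\<Sum>w\<in>click_outputs n l. pmf (map_pmf (\<lambda>T. mout n T x) M) w *\<^sub>R h w)"
    by (rule integral_measure_pmf[OF fin_click]) (use vp x mout_in in auto)
  finally show ?thesis by (simp add: Q_def)
qed

lemma int_Cind: "integrable (measure_pmf M) (\<lambda>T. Cind n T x)"
  by (rule measure_pmf.integrable_const_bound[where B=1]) (auto simp: Cind_def)
lemma int_Fci: "integrable (measure_pmf M) (\<lambda>T. Fci n P T x)"
  by (rule measure_pmf.integrable_const_bound[where B=1]) (auto simp: Fci_def Cind_def)

lemma SA_eq:
  assumes vp: "\<forall>T\<in>set_pmf M. valid_proto n k l T"
  shows "(\<Sum>x\<in>inputs n k. \<mu> x * (\<Sum>w\<in>click_outputs n l. Q n M w x * (if clicked n w then 1 else 0)))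
       = measure_pmf.expectation M (Amass n \<mu> (inputs n k))"
proof -
  have "(\<Sum>x\<in>inputs n k. \<mu> x * (\<Sum>w\<in>click_outputs n l. Q n M w x * (if clicked n w then 1 else 0)))
      = (\<Sum>x\<in>inputs n k. \<mu> x * measure_pmf.expectation M (\<lambda>T. Cind n T x))"
    by (rule sum.cong[OF refl]) (simp add: sumQ[OF vp] Cind_def)
  also have "\<dots> = (\<Sum>x\<in>inputs n k. measure_pmf.expectation M (\<lambda>T. \<mu> x * Cind n T x))"
    by simp
  also have "\<dots> = measure_pmf.expectation M (Amass n \<mu> (inputs n k))"
    unfolding Amass_def by (simp add: int_Cind)
  finally show ?thesis .
qed

lemma SE_eq:
  assumes vp: "\<forall>T\<in>set_pmf M. valid_proto n k l T"
  shows "(\<Sum>x\<in>inputs n k. \<mu> x * (\<Sum>w\<in>click_outputs n l. Q n M w x *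
          (if P (the_out n w) x = 0 then 1 else 0) * (if clicked n w then 1 else 0)))
       = measure_pmf.expectation M (Emass n P \<mu> (inputs n k))"
proof -
  have "(\<Sum>x\<in>inputs n k. \<mu> x * (\<Sum>w\<in>click_outputs n l. Q n M w x *
          (if P (the_out n w) x = 0 then 1 else 0) * (if clicked n w then 1 else 0)))
      = (\<Sum>x\<in>inputs n k. \<mu> x * measure_pmf.expectation M (\<lambda>T. Fci n P T x))"
    by (rule sum.cong[OF refl]) (simp add: sumQ[OF vp] Fci_def Cind_def mult.assoc)
  also have "\<dots> = (\<Sum>x\<in>inputs n k. measure_pmf.expectation M (\<lambda>T. \<mu> x * Fci n P T x))"
    by simp
  also have "\<dots> = measure_pmf.expectation M (Emass n P \<mu> (inputs n k))"
    unfolding Emass_def by (simp add: int_Fci)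
  finally show ?thesis .
qed

lemma main_bound:
  assumes k1: "1 \<le> k" and r: "0 \<le> r"
    and model: "\<forall>T\<in>set_pmf M. valid_proto n k l T \<and> bits T \<le> c"
    and hyp: "\<forall>a\<in>outputs n l. \<forall>Rs. (\<forall>i<n. Rs i \<subseteq> {1..k}) \<longrightarrow>
              mu_set \<mu> (rectangle n Rs) \<le> r + K * errm \<mu> P a (rectangle n Rs)"
  shows "measure_pmf.expectation M (Amass n \<mu> (inputs n k))
     \<le> 2 ^ c * real l ^ n * r + K * measure_pmf.expectation M (Emass n P \<mu> (inputs n k))"
proof -
  have iA: "integrable (measure_pmf M) (Amass n \<mu> (inputs n k))"
    unfolding Amass_def by (simp add: int_Cind)
  have iE: "integrable (measure_pmf M) (Emass n P \<mu> (inputs n k))"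
    unfolding Emass_def by (simp add: int_Fci)
  have "measure_pmf.expectation M (Amass n \<mu> (inputs n k))
     \<le> measure_pmf.expectation M (\<lambda>T. 2 ^ c * real l ^ n * r + K * Emass n P \<mu> (inputs n k) T)"
  proof (rule integral_mono_AE[OF iA])
    show "integrable (measure_pmf M) (\<lambda>T. 2 ^ c * real l ^ n * r + K * Emass n P \<mu> (inputs n k) T)"
      using iE by simp
    show "AE T in measure_pmf M. Amass n \<mu> (inputs n k) T \<le> 2 ^ c * real l ^ n * r + K * Emass n P \<mu> (inputs n k) T"
    proof (rule AE_pmfI)
      fix T assume T: "T \<in> set_pmf M"
      have "Amass n \<mu> (inputs n k) T \<le> 2 ^ bits T * real l ^ n * r + K * Emass n P \<mu> (inputs n k) T"
        using det[OF _ hyp r k1, of T "\<lambda>_. {1..k}"] model T unfolding inputs_def by auto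
      moreover have "(2::real) ^ bits T * (real l ^ n * r) \<le> 2 ^ c * (real l ^ n * r)"
        by (rule mult_right_mono) (use model T r in \<open>auto intro: power_increasing\<close>)
      ultimately show "Amass n \<mu> (inputs n k) T \<le> 2 ^ c * real l ^ n * r + K * Emass n P \<mu> (inputs n k) T"
        by (simp add: mult.assoc)
    qed
  qed
  also have "\<dots> = 2 ^ c * real l ^ n * r + K * measure_pmf.expectation M (Emass n P \<mu> (inputs n k))"
    using iE by simp
  finally show ?thesis .
qed


lemma split_rect:
  assumes corr: "correlation_problem n k l \<mu> P" and a: "a \<in> outputs n l" and R: "R \<subseteq> inputs n k"
  shows "mu_set \<mu> R = mu_set \<mu> (R \<inter> adm n k P a) + errm \<mu> P a R"
    and "0 \<le> errm \<mu> P a R" and "0 \<le> mu_set \<mu> (R \<inter> adm n k P a)" and "mu_set \<mu> R \<le> 1"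
proof -
  have mu0: "\<forall>x\<in>inputs n k. 0 \<le> \<mu> x" and mu1: "(\<Sum>x\<in>inputs n k. \<mu> x) = 1"
    using corr by (auto simp: correlation_problem_def input_distribution_def)
  have P0: "\<And>x. x \<in> inputs n k \<Longrightarrow> 0 < \<mu> x \<Longrightarrow> 0 \<le> P a x"
    using corr a by (auto simp: correlation_problem_def)
  have finR: "finite R" using R fin_inputs finite_subset by blast
  have eqA: "R \<inter> adm n k P a = {x\<in>R. 0 < P a x}" using R by (auto simp: adm_def)
  have m1: "mu_set \<mu> (R \<inter> adm n k P a) = (\<Sum>x\<in>R. if 0 < P a x then \<mu> x else 0)"
    unfolding eqA mu_set_def using finR by (simp add: sum.inter_filter)
  have "mu_set \<mu> R = (\<Sum>x\<in>R. (if 0 < P a x then \<mu> x else 0) + \<mu> x * (if P a x = 0 then 1 else 0))"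
    unfolding mu_set_def
  proof (rule sum.cong[OF refl])
    fix x assume x: "x \<in> R"
    then have xi: "x \<in> inputs n k" using R by auto
    show "\<mu> x = (if 0 < P a x then \<mu> x else 0) + \<mu> x * (if P a x = 0 then 1 else 0)"
    proof (cases "\<mu> x = 0")
      case False
      moreover have "0 \<le> \<mu> x" using mu0 xi by blast
      ultimately have "0 < \<mu> x" by simp
      then have "0 \<le> P a x" using P0 xi by blast
      then show ?thesis by auto
    qed simp
  qed
  then show "mu_set \<mu> R = mu_set \<mu> (R \<inter> adm n k P a) + errm \<mu> P a R"
    unfolding m1 errm_def by (simp add: sum.distrib)
  show "0 \<le> errm \<mu> P a R" unfolding errm_def
    by (rule sum_nonneg) (use mu0 R in auto)
  show "0 \<le> mu_set \<mu> (R \<inter> adm n k P a)" unfolding mu_set_def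
    by (rule sum_nonneg) (use mu0 R in auto)
  have "mu_set \<mu> R \<le> (\<Sum>x\<in>inputs n k. \<mu> x)" unfolding mu_set_def
    by (rule sum_mono2[OF fin_inputs R]) (use mu0 in auto)
  then show "mu_set \<mu> R \<le> 1" using mu1 by simp
qed

lemma rect_sub: "\<forall>i<n. Rs i \<subseteq> {1..k} \<Longrightarrow> rectangle n Rs \<subseteq> inputs n k"
  unfolding rectangle_def inputs_def by (auto simp: PiE_iff)

lemma hyp_lt:
  assumes corr: "correlation_problem n k l \<mu> P" and d: "0 \<le> \<delta>" "\<delta> < 1" and r: "0 \<le> r"
    and rect: "\<forall>a\<in>outputs n l. \<forall>Rs. (\<forall>i<n. Rs i \<subseteq> {1..k}) \<longrightarrow>
                 adv n k \<mu> P a (rectangle n Rs) \<ge> \<delta> \<longrightarrow> mu_set \<mu> (rectangle n Rs) \<le> r"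
  shows "\<forall>a\<in>outputs n l. \<forall>Rs. (\<forall>i<n. Rs i \<subseteq> {1..k}) \<longrightarrow>
              mu_set \<mu> (rectangle n Rs) \<le> r + (1 / (1 - \<delta>)) * errm \<mu> P a (rectangle n Rs)"
proof (intro ballI allI impI)
  fix a Rs assume a: "a \<in> outputs n l" and Rs: "\<forall>i<n. Rs i \<subseteq> {1..k}"
  define R where "R = rectangle n Rs"
  have RI: "R \<subseteq> inputs n k" using rect_sub[OF Rs] by (simp add: R_def)
  note sp = split_rect[OF corr a RI]
  define m where "m = mu_set \<mu> R"
  define m1 where "m1 = mu_set \<mu> (R \<inter> adm n k P a)"
  define e where "e = errm \<mu> P a R"
  have me: "m = m1 + e" "0 \<le> e" "0 \<le> m1" using sp by (simp_all add: m_def m1_def e_def)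
  have Ke: "0 \<le> (1 / (1 - \<delta>)) * e" using me d by simp
  show "mu_set \<mu> (rectangle n Rs) \<le> r + (1 / (1 - \<delta>)) * errm \<mu> P a (rectangle n Rs)"
    unfolding R_def[symmetric] m_def[symmetric] e_def[symmetric]
  proof (cases "\<delta> \<le> adv n k \<mu> P a R")
    case True
    then have "m \<le> r" using rect a Rs by (auto simp: R_def m_def)
    then show "m \<le> r + 1 / (1 - \<delta>) * e" using Ke by simp
  next
    case False
    show "m \<le> r + 1 / (1 - \<delta>) * e"
    proof (cases "m = 0")
      case True then show ?thesis using Ke r by simp
    next
      case mn: False
      then have mp: "0 < m" using me by simp
      have "m1 / m < \<delta>" using False by (simp add: adv_def m1_def m_def)
      then have "m1 < \<delta> * m" using mp by (simp add: divide_less_eq)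
      then have "(1 - \<delta>) * m < e" using me by (simp add: algebra_simps)
      then have "m < e / (1 - \<delta>)" using d by (simp add: less_divide_eq mult.commute)
      then show ?thesis using r by simp
    qed
  qed
qed

lemma hyp_eq:
  assumes corr: "correlation_problem n k l \<mu> P" and r: "0 \<le> r"
    and rect: "\<forall>a\<in>outputs n l. \<forall>Rs. (\<forall>i<n. Rs i \<subseteq> {1..k}) \<longrightarrow>
                 adv n k \<mu> P a (rectangle n Rs) \<ge> 1 \<longrightarrow> mu_set \<mu> (rectangle n Rs) \<le> r"
  shows "\<exists>K. \<forall>a\<in>outputs n l. \<forall>Rs. (\<forall>i<n. Rs i \<subseteq> {1..k}) \<longrightarrow>
              mu_set \<mu> (rectangle n Rs) \<le> r + K * errm \<mu> P a (rectangle n Rs)"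
proof -
  have mu0: "\<forall>x\<in>inputs n k. 0 \<le> \<mu> x" and mu1: "(\<Sum>x\<in>inputs n k. \<mu> x) = 1"
    using corr by (auto simp: correlation_problem_def input_distribution_def)
  define S where "S = \<mu> ` {x\<in>inputs n k. 0 < \<mu> x}"
  have finS: "finite S" unfolding S_def using fin_inputs by simp
  have "\<exists>x\<in>inputs n k. \<mu> x \<noteq> 0"
  proof (rule ccontr)
    assume "\<not> ?thesis"
    then have "(\<Sum>x\<in>inputs n k. \<mu> x) = 0" by simp
    then show False using mu1 by simp
  qed
  then obtain x0 where "x0 \<in> inputs n k" "\<mu> x0 \<noteq> 0" by blast
  then have "\<mu> x0 \<in> S" using mu0 unfolding S_def by (force simp: order_le_less)
  then have Sne: "S \<noteq> {}" by blast
  define m0 where "m0 = Min S"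
  have m0p: "0 < m0" unfolding m0_def using finS Sne by (auto simp: S_def)
  have m0le: "m0 \<le> \<mu> x" if "x \<in> inputs n k" "0 < \<mu> x" for x
    unfolding m0_def using finS that by (intro Min_le) (auto simp: S_def)
  show ?thesis
  proof (rule exI[of _ "1 / m0"], intro ballI allI impI)
    fix a Rs assume a: "a \<in> outputs n l" and Rs: "\<forall>i<n. Rs i \<subseteq> {1..k}"
    define R where "R = rectangle n Rs"
    have RI: "R \<subseteq> inputs n k" using rect_sub[OF Rs] by (simp add: R_def)
    note sp = split_rect[OF corr a RI]
    have finR: "finite R" using RI fin_inputs finite_subset by blast
    have "mu_set \<mu> R \<le> r + 1 / m0 * errm \<mu> P a R"
    proof (cases "errm \<mu> P a R = 0")
      case True
      show ?thesis
      proof (cases "mu_set \<mu> R = 0")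
        case True then show ?thesis using r sp \<open>errm \<mu> P a R = 0\<close> by simp
      next
        case False
        have "adv n k \<mu> P a R = 1" using sp(1) \<open>errm \<mu> P a R = 0\<close> False by (simp add: adv_def)
        then have "mu_set \<mu> R \<le> r" using rect a Rs by (auto simp: R_def)
        then show ?thesis using \<open>errm \<mu> P a R = 0\<close> by simp
      qed
    next
      case False
      then obtain x where x: "x \<in> R" "\<mu> x * (if P a x = 0 then 1 else 0) \<noteq> 0"
        unfolding errm_def by (meson sum.neutral)
      have xi: "x \<in> inputs n k" using x RI by auto
      have mx: "0 < \<mu> x" "P a x = 0" using x mu0 xi by (auto split: if_splits simp: order_le_less)
      have "\<mu> x * (if P a x = 0 then 1 else 0) \<le> errm \<mu> P a R" unfolding errm_def
        by (rule member_le_sum[OF x(1) _ finR]) (use mu0 RI in auto)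
      then have "m0 \<le> errm \<mu> P a R" using m0le[OF xi mx(1)] mx by simp
      then have "1 \<le> 1 / m0 * errm \<mu> P a R" using m0p by simp
      then show ?thesis using sp(4) r by simp
    qed
    then show "mu_set \<mu> (rectangle n Rs) \<le> r + 1 / m0 * errm \<mu> P a (rectangle n Rs)"
      by (simp add: R_def)
  qed
qed


theorem theorem2:
  fixes n k l :: nat and \<mu> :: "(nat \<Rightarrow> nat) \<Rightarrow> real"
    and P :: "(nat \<Rightarrow> nat) \<Rightarrow> (nat \<Rightarrow> nat) \<Rightarrow> real"
    and \<delta> r :: real and M :: "proto pmf" and c :: nat and \<eta> \<epsilon> :: real
  assumes "n \<ge> 1" "k \<ge> 1" "l \<ge> 1"
    and "correlation_problem n k l \<mu> P"
    and "0 \<le> \<delta>" "\<delta> \<le> 1" "0 \<le> r"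
    and rect: "\<forall>a\<in>outputs n l. \<forall>Rs. (\<forall>i<n. Rs i \<subseteq> {1..k}) \<longrightarrow>
                 adv n k \<mu> P a (rectangle n Rs) \<ge> \<delta> \<longrightarrow> mu_set \<mu> (rectangle n Rs) \<le> r"
    and model: "\<forall>T\<in>set_pmf M. valid_proto n k l T \<and> bits T \<le> c"
    and "\<eta> = efficiency n k l \<mu> M"
    and "\<epsilon> = error_prob n k l \<mu> P M"
  shows "(\<delta> < 1 \<longrightarrow> 1 / 2 ^ c * \<eta> ^ n * (1 - \<epsilon> * (1 / (1 - \<delta>))) \<le> real l ^ n * r)
       \<and> (\<delta> = 1 \<and> \<epsilon> = 0 \<longrightarrow> 1 / 2 ^ c * \<eta> ^ n \<le> real l ^ n * r)"
proof -
  note corr = assms(4)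
  have vp: "\<forall>T\<in>set_pmf M. valid_proto n k l T" using model by blast
  define SA where "SA = (\<Sum>x\<in>inputs n k. \<mu> x * (\<Sum>w\<in>click_outputs n l. Q n M w x * (if clicked n w then 1 else 0)))"
  define SE where "SE = (\<Sum>x\<in>inputs n k. \<mu> x * (\<Sum>w\<in>click_outputs n l. Q n M w x *
          (if P (the_out n w) x = 0 then 1 else 0) * (if clicked n w then 1 else 0)))"
  have mu0: "\<forall>x\<in>inputs n k. 0 \<le> \<mu> x"
    using corr by (auto simp: correlation_problem_def input_distribution_def)
  have SA0: "0 \<le> SA" unfolding SA_def
    by (intro sum_nonneg mult_nonneg_nonneg) (use mu0 in \<open>auto simp: Q_def\<close>)
  have eta: "\<eta> ^ n = SA" using assms(1,10) SA0 by (simp add: efficiency_def SA_def)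
  have eps: "\<epsilon> = SE / SA" using assms(11) eta by (simp add: error_prob_def SE_def assms(10))
  have bound: "SA \<le> 2 ^ c * real l ^ n * r + K * SE" if
    "\<forall>a\<in>outputs n l. \<forall>Rs. (\<forall>i<n. Rs i \<subseteq> {1..k}) \<longrightarrow>
              mu_set \<mu> (rectangle n Rs) \<le> r + K * errm \<mu> P a (rectangle n Rs)" for K
    unfolding SA_def SE_def SA_eq[OF vp] SE_eq[OF vp]
    by (rule main_bound[OF assms(2,7) model that])
  have c0: "(0::real) < 2 ^ c" by simp
  have lr: "0 \<le> real l ^ n * r" using assms(7) by simp
  show ?thesis
  proof (intro conjI impI)
    assume d: "\<delta> < 1"
    have b: "SA \<le> 2 ^ c * real l ^ n * r + (1 / (1 - \<delta>)) * SE"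
      by (rule bound[OF hyp_lt[OF corr assms(5) d assms(7) rect]])
    show "1 / 2 ^ c * \<eta> ^ n * (1 - \<epsilon> * (1 / (1 - \<delta>))) \<le> real l ^ n * r"
    proof (cases "SA = 0")
      case True then show ?thesis unfolding eta True using lr by simp
    next
      case False
      have "\<eta> ^ n * (1 - \<epsilon> * (1 / (1 - \<delta>))) = SA - (1 / (1 - \<delta>)) * SE"
      proof -
        have d1: "1 - \<delta> \<noteq> 0" using d by simp
        show ?thesis using False d1 by (simp add: eta eps field_simps)
      qed
      also have "\<dots> \<le> 2 ^ c * (real l ^ n * r)" using b by simp
      finally have "\<eta> ^ n * (1 - \<epsilon> * (1 / (1 - \<delta>))) \<le> 2 ^ c * (real l ^ n * r)" .
      then show ?thesis using c0 by (simp add: divide_le_eq mult.commute)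
    qed
  next
    assume d: "\<delta> = 1 \<and> \<epsilon> = 0"
    show "1 / 2 ^ c * \<eta> ^ n \<le> real l ^ n * r"
    proof (cases "SA = 0")
      case True then show ?thesis unfolding eta True using lr by simp
    next
      case False
      then have "SE = 0" using d eps by simp
      obtain K where "\<forall>a\<in>outputs n l. \<forall>Rs. (\<forall>i<n. Rs i \<subseteq> {1..k}) \<longrightarrow>
              mu_set \<mu> (rectangle n Rs) \<le> r + K * errm \<mu> P a (rectangle n Rs)"
        using hyp_eq[OF corr assms(7)] rect d by auto
      from bound[OF this] \<open>SE = 0\<close> have "SA \<le> 2 ^ c * (real l ^ n * r)" by simp
      then show ?thesis unfolding eta using c0 by (simp add: divide_le_eq mult.commute)
    qed
  qed
qed

end
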